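(* Let $l\ge3$ and consider the edge reinforced random walk $(I_n)$ on $\mathcal G_l$ with weight function $W:\mathbb N\to(0,\infty)$ and arbitrary initial edge weights $X_0^e\in\mathbb N$. For each $i\in\{0,\ldots,l-1\}$ the process $\kappa_n^i:=\sum_{k=0}^{n-1}\frac{1_{\{I_k=i,\,I_{k+1}=i+1\}}}{W(X_k^{e_i})}-\sum_{k=0}^{n-1}\frac{1_{\{I_k=i,\,I_{k+1}=i-1\}}}{W(X_k^{e_{i-1}})}$, $n\ge0$, is an $(\mathcal F_n)$-martingale. Moreover, if $l$ is even, then $\kappa_n:=\sum_{i=0}^{l-1}(-1)^i\kappa_n^i+\sum_{i=0}^{l-1}(-1)^iW^*(X_0^{e_i})$ satisfies $\kappa_n=\sum_{i=0}^{l-1}(-1)^iW^*(X_n^{e_i})$ for all $n$, it is a martingale, and if in addition $\sum_{k\in\mathbb N}\frac1{W(k)}<\infty$ then $\kappa_n$ converges almost surely to a finite limit $\kappa_\infty$, with $\kappa_\infty=0$ almost surely on the event that all edges of $\mathcal G_l$ are traversed infinitely often.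
   Context: $\mathbb N=\{0,1,2,\ldots\}$. For $l\ge 3$, the cycle $\mathcal G_l$ has vertices $\{0,\ldots,l-1\}$ and edges $e_i=\{i,i+1\}$, addition modulo $l$. ERRW on $\mathcal G_l$: given $W:\mathbb N\to(0,\infty)$, initial edge weights $X_0^e\in\mathbb N$ and $I_0=v_0$, with natural filtration $(\mathcal F_n)$, $\mathbb P(I_{n+1}=v'\mid\mathcal F_n)1_{\{I_n=v\}}=\frac{W(X_n^{\{v,v'\}})}{\sum_{w\sim v}W(X_n^{\{v,w\}})}1_{\{I_n=v\sim v'\}}$, where $X_n^e=X_0^e+\sum_{k=0}^{n-1}1_{\{\{I_k,I_{k+1}\}=e\}}$. Define $W^*(n):=\sum_{k=0}^{n-1}\frac1{W(k)}$ for $n\in\mathbb N$, with $W^*(0)=0$. *)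

theory Defs
  imports "HOL-Probability.Probability"
begin

definition cyc_edge :: "nat \<Rightarrow> nat \<Rightarrow> nat set" where
  "cyc_edge l i = {i, Suc i mod l}"

definition cyc_adj :: "nat \<Rightarrow> nat \<Rightarrow> nat \<Rightarrow> bool" where
  "cyc_adj l v w \<longleftrightarrow> v < l \<and> w < l \<and> (w = Suc v mod l \<or> v = Suc w mod l)"

definition edge_wt :: "(nat set \<Rightarrow> nat) \<Rightarrow> (nat \<Rightarrow> 'a \<Rightarrow> nat) \<Rightarrow> nat \<Rightarrow> nat set \<Rightarrow> 'a \<Rightarrow> nat" where
  "edge_wt X0 I n e x = X0 e + card {k. k < n \<and> {I k x, I (Suc k) x} = e}"

definition Wstar :: "(nat \<Rightarrow> real) \<Rightarrow> nat \<Rightarrow> real" where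
  "Wstar W n = (\<Sum>k<n. 1 / W k)"

definition nat_filt :: "'a measure \<Rightarrow> (nat \<Rightarrow> 'a \<Rightarrow> nat) \<Rightarrow> nat \<Rightarrow> 'a measure" where
  "nat_filt M I n = sigma (space M) {I k -` A \<inter> space M | k A. k \<le> n}"

definition martingale :: "'a measure \<Rightarrow> (nat \<Rightarrow> 'a measure) \<Rightarrow> (nat \<Rightarrow> 'a \<Rightarrow> real) \<Rightarrow> bool" where
  "martingale M F Y \<longleftrightarrow>
     (\<forall>n. Y n \<in> borel_measurable (F n)) \<and>
     (\<forall>n. integrable M (Y n)) \<and>
     (\<forall>n. AE x in M. real_cond_exp M (F n) (Y (Suc n)) x = Y n x)"

definition is_errw :: "'a measure \<Rightarrow> nat \<Rightarrow> (nat \<Rightarrow> real) \<Rightarrow> (nat set \<Rightarrow> nat) \<Rightarrow> nat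
      \<Rightarrow> (nat \<Rightarrow> 'a \<Rightarrow> nat) \<Rightarrow> bool" where
  "is_errw M l W X0 v0 I \<longleftrightarrow>
     prob_space M \<and>
     (\<forall>n. I n \<in> measurable M (count_space UNIV)) \<and>
     (\<forall>n. \<forall>x\<in>space M. I n x < l) \<and>
     (\<forall>x\<in>space M. I 0 x = v0) \<and>
     (\<forall>n v v'. AE x in M.
        (if I n x = v then 1 else 0) *
          real_cond_exp M (nat_filt M I n) (\<lambda>y. if I (Suc n) y = v' then 1 else 0) x
        = (if I n x = v \<and> cyc_adj l v v' then
             W (edge_wt X0 I n {v, v'} x) /
               (\<Sum>w\<in>{w. cyc_adj l v w}. W (edge_wt X0 I n {v, w} x))
           else 0))"

definition kappa_i :: "nat \<Rightarrow> (nat \<Rightarrow> real) \<Rightarrow> (nat set \<Rightarrow> nat) \<Rightarrow> (nat \<Rightarrow> 'a \<Rightarrow> nat)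
      \<Rightarrow> nat \<Rightarrow> nat \<Rightarrow> 'a \<Rightarrow> real" where
  "kappa_i l W X0 I i n x =
     (\<Sum>k<n. (if I k x = i \<and> I (Suc k) x = Suc i mod l
               then 1 / W (edge_wt X0 I k (cyc_edge l i) x) else 0))
   - (\<Sum>k<n. (if I k x = i \<and> I (Suc k) x = (i + l - 1) mod l
               then 1 / W (edge_wt X0 I k (cyc_edge l ((i + l - 1) mod l)) x) else 0))"

definition kappa :: "nat \<Rightarrow> (nat \<Rightarrow> real) \<Rightarrow> (nat set \<Rightarrow> nat) \<Rightarrow> (nat \<Rightarrow> 'a \<Rightarrow> nat)
      \<Rightarrow> nat \<Rightarrow> 'a \<Rightarrow> real" where
  "kappa l W X0 I n x =
     (\<Sum>i<l. (-1) ^ i * kappa_i l W X0 I i n x) + (\<Sum>i<l. (-1) ^ i * Wstar W (X0 (cyc_edge l i)))"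

end

theory Submission
  imports Defs
begin

lemma nat_filt_basic:
  assumes meas: "\<And>n. I n \<in> measurable M (count_space UNIV)"
  shows "space (nat_filt M I n) = space M"
    and "sets (nat_filt M I n) \<subseteq> sets M"
    and "k \<le> n \<Longrightarrow> I k -` A \<inter> space M \<in> sets (nat_filt M I n)"
proof -
  have G: "{I k -` A \<inter> space M | k A. k \<le> n} \<subseteq> Pow (space M)" by auto
  show "space (nat_filt M I n) = space M" unfolding nat_filt_def using G by simp
  show "sets (nat_filt M I n) \<subseteq> sets M" unfolding nat_filt_def sets_measure_of[OF G]
    by (rule sets.sigma_sets_subset) (auto intro: measurable_sets[OF meas])
  show "k \<le> n \<Longrightarrow> I k -` A \<inter> space M \<in> sets (nat_filt M I n)" unfolding nat_filt_def using G by auto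
qed

lemma filt_meas_dep:
  assumes meas: "\<And>n. I n \<in> measurable M (count_space UNIV)"
    and dep: "\<And>x y. x \<in> space M \<Longrightarrow> y \<in> space M \<Longrightarrow> (\<And>k. k \<le> n \<Longrightarrow> I k x = I k y) \<Longrightarrow> g x = g y"
  shows "g \<in> borel_measurable (nat_filt M I n)"
proof -
  define F where "F = nat_filt M I n"
  have spF: "space F = space M" using nat_filt_basic[OF meas] F_def by simp
  define v where "v x = map (\<lambda>k. I k x) [0..<Suc n]" for x
  have vm: "v \<in> measurable F (count_space UNIV)"
    unfolding measurable_count_space_eq2_countable
  proof safe
    fix xs :: "nat list"
    show "v -` {xs} \<inter> space F \<in> sets F"
    proof (cases "length xs = Suc n")
      case True
      have "v -` {xs} \<inter> space F = (\<Inter>k\<in>{..n}. I k -` {xs ! k} \<inter> space M)"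
        using True spF by (auto simp del: upt_Suc simp: v_def list_eq_iff_nth_eq less_Suc_eq_le)
      also have "... \<in> sets F"
        by (rule sets.finite_INT) (auto simp: F_def intro: nat_filt_basic(3)[OF meas])
      finally show ?thesis .
    next
      case False
      then have "v -` {xs} \<inter> space F = {}" by (auto simp: v_def)
      then show ?thesis by simp
    qed
  qed auto
  define h where "h xs = g (SOME y. y \<in> space M \<and> v y = xs)" for xs
  have "(\<lambda>x. h (v x)) \<in> borel_measurable F"
    by (rule measurable_compose_countable[OF _ vm]) simp
  moreover have "h (v x) = g x" if x: "x \<in> space F" for x
  proof -
    let ?y = "SOME y. y \<in> space M \<and> v y = v x"
    have y: "?y \<in> space M \<and> v ?y = v x" by (rule someI[of _ x]) (use x spF in auto)
    have "g ?y = g x"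
    proof (rule dep)
      fix k assume "k \<le> n"
      then have "v ?y ! k = I k ?y" "v x ! k = I k x" by (auto simp del: upt_Suc simp: v_def nth_map less_Suc_eq_le)
      then show "I k ?y = I k x" using y by simp
    qed (use y x spF in auto)
    then show ?thesis by (simp add: h_def)
  qed
  ultimately show ?thesis unfolding F_def[symmetric] using measurable_cong by (smt (verit))
qed

lemma meas_M_dep:
  fixes I :: "nat \<Rightarrow> 'a \<Rightarrow> nat"
  assumes meas: "\<And>n. I n \<in> measurable M (count_space UNIV)"
    and dep: "\<And>x y. x \<in> space M \<Longrightarrow> y \<in> space M \<Longrightarrow> (\<And>k. k \<le> N \<Longrightarrow> I k x = I k y) \<Longrightarrow> g x = g y"
  shows "g \<in> borel_measurable M"
proof (rule measurable_from_subalg)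
  show "g \<in> borel_measurable (nat_filt M I N)" using filt_meas_dep[of I M N g] meas dep by blast
qed (auto simp: subalgebra_def nat_filt_basic[OF meas])

lemma nat_filt_subalg:
  assumes P: "prob_space M" and meas: "\<And>n. I n \<in> measurable M (count_space UNIV)"
  shows "sigma_finite_subalgebra M (nat_filt M I n)"
proof -
  interpret prob_space M by fact
  have "finite_measure_subalgebra M (nat_filt M I n)"
    by unfold_locales (auto simp: subalgebra_def nat_filt_basic[OF meas])
  then show ?thesis using finite_measure_subalgebra_is_sigma_finite by blast
qed

lemma martingale_incr:
  assumes P: "prob_space M" and meas: "\<And>n. I n \<in> measurable M (count_space UNIV)"
    and Ym: "\<And>n. Y n \<in> borel_measurable (nat_filt M I n)"
    and Y0: "\<exists>B. \<forall>x\<in>space M. \<bar>Y 0 x\<bar> \<le> B"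
    and Db: "\<And>n. \<exists>B. \<forall>x\<in>space M. \<bar>Y (Suc n) x - Y n x\<bar> \<le> B"
    and DE: "\<And>n. AE x in M. real_cond_exp M (nat_filt M I n) (\<lambda>x. Y (Suc n) x - Y n x) x = 0"
  shows "martingale M (nat_filt M I) Y"
proof -
  interpret prob_space M by fact
  have sub: "subalgebra M (nat_filt M I n)" for n by (auto simp: subalgebra_def nat_filt_basic[OF meas])
  have YM: "Y n \<in> borel_measurable M" for n using measurable_from_subalg[OF sub Ym] .
  have bd: "\<exists>B. \<forall>x\<in>space M. \<bar>Y n x\<bar> \<le> B" for n
  proof (induction n)
    case 0 then show ?case using Y0 .
  next
    case (Suc n)
    then obtain B where B: "\<forall>x\<in>space M. \<bar>Y n x\<bar> \<le> B" by blast
    obtain C where C: "\<forall>x\<in>space M. \<bar>Y (Suc n) x - Y n x\<bar> \<le> C" using Db by blast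
    have "\<forall>x\<in>space M. \<bar>Y (Suc n) x\<bar> \<le> B + C"
    proof
      fix x assume "x \<in> space M"
      with B C have "\<bar>Y n x\<bar> \<le> B" "\<bar>Y (Suc n) x - Y n x\<bar> \<le> C" by auto
      then show "\<bar>Y (Suc n) x\<bar> \<le> B + C" by linarith
    qed
    then show ?case by blast
  qed
  have int: "integrable M (Y n)" for n
  proof -
    obtain B where "\<forall>x\<in>space M. \<bar>Y n x\<bar> \<le> B" using bd by blast
    then show ?thesis by (intro integrable_const_bound[where B=B] YM) auto
  qed
  have "AE x in M. real_cond_exp M (nat_filt M I n) (Y (Suc n)) x = Y n x" for n
  proof -
    interpret S: sigma_finite_subalgebra M "nat_filt M I n" by (rule nat_filt_subalg[OF P meas])
    have i2: "integrable M (\<lambda>x. Y (Suc n) x - Y n x)" using int by auto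
    have "AE x in M. real_cond_exp M (nat_filt M I n) (\<lambda>x. (Y (Suc n) x - Y n x) + Y n x) x
       = real_cond_exp M (nat_filt M I n) (\<lambda>x. Y (Suc n) x - Y n x) x + real_cond_exp M (nat_filt M I n) (Y n) x"
      by (rule S.real_cond_exp_add[OF i2 int])
    moreover have "AE x in M. real_cond_exp M (nat_filt M I n) (Y n) x = Y n x"
      by (rule S.real_cond_exp_F_meas[OF int Ym])
    ultimately show ?thesis using DE[of n] by eventually_elim simp
  qed
  then show ?thesis unfolding martingale_def using Ym int by blast
qed

lemma martingale_lincomb:
  assumes P: "prob_space M" and meas: "\<And>n. I n \<in> measurable M (count_space UNIV)"
    and mart: "\<And>i. i \<in> A \<Longrightarrow> martingale M (nat_filt M I) (Y i)"
    and fin: "finite A"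
  shows "martingale M (nat_filt M I) (\<lambda>n x. (\<Sum>i\<in>A. c i * Y i n x) + (C::real))"
proof -
  interpret prob_space M by fact
  have sub: "subalgebra M (nat_filt M I n)" for n by (auto simp: subalgebra_def nat_filt_basic[OF meas])
  have Ym: "i \<in> A \<Longrightarrow> Y i n \<in> borel_measurable (nat_filt M I n)" for i n
    using mart unfolding martingale_def by blast
  have Yi: "i \<in> A \<Longrightarrow> integrable M (Y i n)" for i n
    using mart unfolding martingale_def by blast
  have YE: "i \<in> A \<Longrightarrow> AE x in M. real_cond_exp M (nat_filt M I n) (Y i (Suc n)) x = Y i n x" for i n
    using mart unfolding martingale_def by blast
  have m1: "(\<lambda>x. (\<Sum>i\<in>A. c i * Y i n x) + C) \<in> borel_measurable (nat_filt M I n)" for n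
    using Ym by (intro borel_measurable_add borel_measurable_sum borel_measurable_times borel_measurable_const) auto
  have i1: "integrable M (\<lambda>x. (\<Sum>i\<in>A. c i * Y i n x) + C)" for n
    using Yi by (intro Bochner_Integration.integrable_add integrable_sum integrable_mult_right) auto
  have "AE x in M. real_cond_exp M (nat_filt M I n) (\<lambda>x. (\<Sum>i\<in>A. c i * Y i (Suc n) x) + C) x
          = (\<Sum>i\<in>A. c i * Y i n x) + C" for n
  proof -
    interpret S: sigma_finite_subalgebra M "nat_filt M I n" by (rule nat_filt_subalg[OF P meas])
    define f where "f i = (if i \<in> A then (\<lambda>x. c i * Y i (Suc n) x) else (\<lambda>x. 0))" for i
    have fi: "integrable M (f i)" for i
      using Yi by (cases "i \<in> A") (auto simp: f_def)
    have feq: "(\<lambda>x. \<Sum>i\<in>A. f i x) = (\<lambda>x. \<Sum>i\<in>A. c i * Y i (Suc n) x)"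
      by (auto simp: f_def intro!: sum.cong)
    have isum: "integrable M (\<lambda>x. \<Sum>i\<in>A. c i * Y i (Suc n) x)"
      using Yi by (intro Bochner_Integration.integrable_sum integrable_mult_right) auto
    have a1: "AE x in M. real_cond_exp M (nat_filt M I n) (\<lambda>x. (\<Sum>i\<in>A. c i * Y i (Suc n) x) + C) x
       = real_cond_exp M (nat_filt M I n) (\<lambda>x. \<Sum>i\<in>A. c i * Y i (Suc n) x) x + real_cond_exp M (nat_filt M I n) (\<lambda>x. C) x"
      by (rule S.real_cond_exp_add[OF isum]) simp
    have a2: "AE x in M. real_cond_exp M (nat_filt M I n) (\<lambda>x. C) x = C"
      by (rule S.real_cond_exp_F_meas) auto
    have a3: "AE x in M. real_cond_exp M (nat_filt M I n) (\<lambda>x. \<Sum>i\<in>A. f i x) x = (\<Sum>i\<in>A. real_cond_exp M (nat_filt M I n) (f i) x)"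
      by (rule S.real_cond_exp_sum[OF fi])
    have a4: "AE x in M. \<forall>i\<in>A. real_cond_exp M (nat_filt M I n) (f i) x = c i * Y i n x"
    proof (rule eventually_ball_finite[OF fin], intro ballI)
      fix i assume iA: "i \<in> A"
      have fe: "f i = (\<lambda>x. c i * Y i (Suc n) x)" using iA by (auto simp: f_def)
      have "AE x in M. real_cond_exp M (nat_filt M I n) (\<lambda>x. c i * Y i (Suc n) x) x = c i * real_cond_exp M (nat_filt M I n) (Y i (Suc n)) x"
        by (rule S.real_cond_exp_cmult[OF Yi[OF iA]])
      then show "AE x in M. real_cond_exp M (nat_filt M I n) (f i) x = c i * Y i n x"
        using YE[OF iA, of n] unfolding fe by eventually_elim simp
    qed
    from a1 a2 a3 a4 show ?thesis unfolding feq
      by eventually_elim (simp cong: sum.cong)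
  qed
  then show ?thesis unfolding martingale_def using m1 i1 by blast
qed

lemma sucmod: "i < l \<Longrightarrow> Suc i mod l = (if Suc i = l then 0 else Suc i)"
  by (simp add: mod_Suc)

lemma predmod: assumes "i < (l::nat)" shows "(i + l - 1) mod l = (if i = 0 then l - 1 else i - 1)"
proof (cases i)
  case 0 then show ?thesis using assms by simp
next
  case (Suc j)
  from assms have "i + l - 1 = j + l" using Suc by simp
  then show ?thesis using Suc \<open>i < l\<close> by simp
qed

lemma edge_wt_cong:
  assumes "\<And>j. j \<le> k \<Longrightarrow> I j x = I j y"
  shows "edge_wt X0 I k e x = edge_wt X0 I k e y"
proof -
  have "{j. j < k \<and> {I j x, I (Suc j) x} = e} = {j. j < k \<and> {I j y, I (Suc j) y} = e}"
    using assms by (auto simp: Suc_le_eq)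
  then show ?thesis unfolding edge_wt_def by simp
qed

lemma kappa_i_cong:
  assumes "\<And>j. j \<le> n \<Longrightarrow> I j x = I j y"
  shows "kappa_i l W X0 I i n x = kappa_i l W X0 I i n y"
proof -
  have h: "k < n \<Longrightarrow> I k x = I k y \<and> I (Suc k) x = I (Suc k) y \<and> edge_wt X0 I k e x = edge_wt X0 I k e y" for k e
    using assms by (auto simp: Suc_le_eq intro!: edge_wt_cong)
  show ?thesis unfolding kappa_i_def
    by (intro arg_cong2[where f="(-)"] sum.cong refl) (simp_all add: h)
qed

lemma cyc_facts:
  assumes l3: "l \<ge> 3" and i: "i < l"
  shows "cyc_adj l i (Suc i mod l)" "cyc_adj l i ((i + l - 1) mod l)"
    "{w. cyc_adj l i w} = {Suc i mod l, (i + l - 1) mod l}"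
    "Suc i mod l \<noteq> (i + l - 1) mod l"
    "cyc_edge l i = {i, Suc i mod l}"
    "cyc_edge l ((i + l - 1) mod l) = {i, (i + l - 1) mod l}"
proof -
  have S: "Suc i mod l = (if Suc i = l then 0 else Suc i)" by (rule sucmod[OF i])
  have Pm: "(i + l - 1) mod l = (if i = 0 then l - 1 else i - 1)" by (rule predmod[OF i])
  show "cyc_adj l i (Suc i mod l)" unfolding cyc_adj_def S using i by auto
  show "cyc_adj l i ((i + l - 1) mod l)" unfolding cyc_adj_def Pm using i l3 by (auto simp: sucmod)
  show "Suc i mod l \<noteq> (i + l - 1) mod l" unfolding S Pm using i l3 by auto
  show "cyc_edge l i = {i, Suc i mod l}" unfolding cyc_edge_def ..
  show "cyc_edge l ((i + l - 1) mod l) = {i, (i + l - 1) mod l}" unfolding cyc_edge_def Pm using i l3 by (auto simp: sucmod)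
  show "{w. cyc_adj l i w} = {Suc i mod l, (i + l - 1) mod l}" unfolding cyc_adj_def S Pm using i l3
    by (auto simp: sucmod split: if_splits dest!: dvd_imp_le)
qed

lemma inv_W_bound: fixes W :: "nat \<Rightarrow> real" shows "(\<And>k. W k > 0) \<Longrightarrow> m \<le> N \<Longrightarrow> 1 / W m \<le> (\<Sum>j\<le>N. 1 / W j)"
  by (rule member_le_sum[where f="\<lambda>j. 1 / W j"]) (auto simp: less_imp_le)

lemma edge_wt_le: "edge_wt X0 I n e x \<le> X0 e + n"
proof -
  have "card {k. k < n \<and> {I k x, I (Suc k) x} = e} \<le> card {..<n}"
    by (rule card_mono) auto
  then show ?thesis unfolding edge_wt_def by simp
qed

lemma inv_W_edge_bound: fixes W :: "nat \<Rightarrow> real" shows "(\<And>k. W k > 0) \<Longrightarrow> 1 / W (edge_wt X0 I n e x) \<le> (\<Sum>j\<le>X0 e + n. 1 / W j)"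
  by (rule inv_W_bound) (auto simp: edge_wt_le)

lemma prod_bound:
  fixes f g :: "'a \<Rightarrow> real" and B :: real
  assumes "\<And>x. \<bar>f x\<bar> \<le> B" "\<And>x. \<bar>g x\<bar> \<le> 1"
  shows "\<bar>f x * g x\<bar> \<le> B"
proof -
  have "\<bar>f x * g x\<bar> = \<bar>f x\<bar> * \<bar>g x\<bar>" by (simp add: abs_mult)
  also have "\<dots> \<le> B * 1" by (rule mult_mono) (auto intro: order_trans[OF abs_ge_zero assms(1)] assms)
  finally show ?thesis by simp
qed

lemma kappa_i_mart:
  fixes I :: "nat \<Rightarrow> 'a \<Rightarrow> nat"
  assumes l3: "l \<ge> 3" and Wpos: "\<And>k. W k > 0" and i: "i < l"
    and P: "prob_space M" and meas: "\<And>n. I n \<in> measurable M (count_space UNIV)"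
    and tr: "\<And>n v v'. AE x in M. (if I n x = v then 1 else 0) * real_cond_exp M (nat_filt M I n) (\<lambda>y. if I (Suc n) y = v' then 1 else 0) x
        = (if I n x = v \<and> cyc_adj l v v' then W (edge_wt X0 I n {v, v'} x) / (\<Sum>w\<in>{w. cyc_adj l v w}. W (edge_wt X0 I n {v, w} x)) else 0)"
  shows "martingale M (nat_filt M I) (kappa_i l W X0 I i)"
proof (rule martingale_incr[OF P meas])
  interpret prob_space M by fact
  define s where "s = Suc i mod l"
  define p where "p = (i + l - 1) mod l"
  note cf = cyc_facts[OF l3 i, folded s_def p_def]
  show "kappa_i l W X0 I i n \<in> borel_measurable (nat_filt M I n)" for n
    by (rule filt_meas_dep[OF meas], rule kappa_i_cong, blast)
  show "\<exists>B. \<forall>x\<in>space M. \<bar>kappa_i l W X0 I i 0 x\<bar> \<le> B" by (auto simp: kappa_i_def)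
  define f1 where "f1 n x = (if I n x = i then 1 / W (edge_wt X0 I n {i, s} x) else 0)" for n x
  define f2 where "f2 n x = (if I n x = i then 1 / W (edge_wt X0 I n {i, p} x) else 0)" for n x
  define g1 where "g1 n = (\<lambda>y. if I (Suc n) y = s then 1 else (0::real))" for n
  define g2 where "g2 n = (\<lambda>y. if I (Suc n) y = p then 1 else (0::real))" for n
  have incr: "(\<lambda>x. kappa_i l W X0 I i (Suc n) x - kappa_i l W X0 I i n x) =
     (\<lambda>x. f1 n x * g1 n x - f2 n x * g2 n x)" for n
    unfolding kappa_i_def s_def[symmetric] p_def[symmetric]
    by (rule ext) (simp add: cf f1_def f2_def g1_def g2_def)
  define B1 where "B1 n = (\<Sum>j\<le>X0 {i, s} + n. 1 / W j)" for n
  define B2 where "B2 n = (\<Sum>j\<le>X0 {i, p} + n. 1 / W j)" for n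
  have f1b: "\<bar>f1 n x\<bar> \<le> B1 n" for n x
  proof -
    have "0 \<le> B1 n" unfolding B1_def using Wpos by (intro sum_nonneg) (simp add: less_imp_le)
    moreover have "1 / W (edge_wt X0 I n {i, s} x) \<le> B1 n" unfolding B1_def by (rule inv_W_edge_bound[OF Wpos])
    moreover have "0 < W (edge_wt X0 I n {i, s} x)" by (rule Wpos)
    ultimately show ?thesis by (simp add: f1_def)
  qed
  have f2b: "\<bar>f2 n x\<bar> \<le> B2 n" for n x
  proof -
    have "0 \<le> B2 n" unfolding B2_def using Wpos by (intro sum_nonneg) (simp add: less_imp_le)
    moreover have "1 / W (edge_wt X0 I n {i, p} x) \<le> B2 n" unfolding B2_def by (rule inv_W_edge_bound[OF Wpos])
    moreover have "0 < W (edge_wt X0 I n {i, p} x)" by (rule Wpos)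
    ultimately show ?thesis by (simp add: f2_def)
  qed
  have g1b: "\<bar>g1 n x\<bar> \<le> 1" "\<bar>g2 n x\<bar> \<le> 1" for n x by (auto simp: g1_def g2_def)
  show "\<exists>B. \<forall>x\<in>space M. \<bar>kappa_i l W X0 I i (Suc n) x - kappa_i l W X0 I i n x\<bar> \<le> B" for n
  proof (intro exI ballI)
    fix x
    have "\<bar>f1 n x * g1 n x - f2 n x * g2 n x\<bar> \<le> \<bar>f1 n x * g1 n x\<bar> + \<bar>f2 n x * g2 n x\<bar>" by (rule abs_triangle_ineq4)
    also have "\<dots> \<le> B1 n + B2 n" using prod_bound[where f="f1 n" and g="g1 n" and B="B1 n", OF f1b g1b(1), of x] prod_bound[where f="f2 n" and g="g2 n" and B="B2 n", OF f2b g1b(2), of x] by linarith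
    finally show "\<bar>kappa_i l W X0 I i (Suc n) x - kappa_i l W X0 I i n x\<bar> \<le> B1 n + B2 n"
      using fun_cong[OF incr[of n], of x] by simp
  qed
  show "AE x in M. real_cond_exp M (nat_filt M I n) (\<lambda>x. kappa_i l W X0 I i (Suc n) x - kappa_i l W X0 I i n x) x = 0" for n
  proof -
    interpret S: sigma_finite_subalgebra M "nat_filt M I n" by (rule nat_filt_subalg[OF P meas])
    have sub: "subalgebra M (nat_filt M I n)" by (auto simp: subalgebra_def nat_filt_basic[OF meas])
    have f1m: "f1 n \<in> borel_measurable (nat_filt M I n)"
      by (rule filt_meas_dep[OF meas]) (auto simp: f1_def intro!: arg_cong[where f=W] edge_wt_cong)
    have f2m: "f2 n \<in> borel_measurable (nat_filt M I n)"
      by (rule filt_meas_dep[OF meas]) (auto simp: f2_def intro!: arg_cong[where f=W] edge_wt_cong)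
    have g1m: "g1 n \<in> borel_measurable M"
      by (rule meas_M_dep[of I M "Suc n", OF meas]) (auto simp: g1_def)
    have g2m: "g2 n \<in> borel_measurable M"
      by (rule meas_M_dep[of I M "Suc n", OF meas]) (auto simp: g2_def)
    have f1M: "f1 n \<in> borel_measurable M" by (rule measurable_from_subalg[OF sub f1m])
    have f2M: "f2 n \<in> borel_measurable M" by (rule measurable_from_subalg[OF sub f2m])
    have int1: "integrable M (\<lambda>x. f1 n x * g1 n x)"
      by (rule integrable_const_bound[where B="B1 n"]) (use prod_bound[where f="f1 n" and g="g1 n" and B="B1 n", OF f1b g1b(1)] f1M g1m in auto)
    have int2: "integrable M (\<lambda>x. f2 n x * g2 n x)"
      by (rule integrable_const_bound[where B="B2 n"]) (use prod_bound[where f="f2 n" and g="g2 n" and B="B2 n", OF f2b g1b(2)] f2M g2m in auto)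
    have A: "AE x in M. real_cond_exp M (nat_filt M I n) (\<lambda>x. f1 n x * g1 n x - f2 n x * g2 n x) x
       = real_cond_exp M (nat_filt M I n) (\<lambda>x. f1 n x * g1 n x) x - real_cond_exp M (nat_filt M I n) (\<lambda>x. f2 n x * g2 n x) x"
      by (rule S.real_cond_exp_diff[OF int1 int2])
    have B1': "AE x in M. real_cond_exp M (nat_filt M I n) (\<lambda>x. f1 n x * g1 n x) x = f1 n x * real_cond_exp M (nat_filt M I n) (g1 n) x"
      by (rule S.real_cond_exp_mult[OF f1m g1m int1])
    have B2': "AE x in M. real_cond_exp M (nat_filt M I n) (\<lambda>x. f2 n x * g2 n x) x = f2 n x * real_cond_exp M (nat_filt M I n) (g2 n) x"
      by (rule S.real_cond_exp_mult[OF f2m g2m int2])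
    have T1: "AE x in M. (if I n x = i then 1 else 0) * real_cond_exp M (nat_filt M I n) (g1 n) x
        = (if I n x = i \<and> cyc_adj l i s then W (edge_wt X0 I n {i, s} x) / (\<Sum>w\<in>{w. cyc_adj l i w}. W (edge_wt X0 I n {i, w} x)) else 0)"
      unfolding g1_def by (rule tr)
    have T2: "AE x in M. (if I n x = i then 1 else 0) * real_cond_exp M (nat_filt M I n) (g2 n) x
        = (if I n x = i \<and> cyc_adj l i p then W (edge_wt X0 I n {i, p} x) / (\<Sum>w\<in>{w. cyc_adj l i w}. W (edge_wt X0 I n {i, w} x)) else 0)"
      unfolding g2_def by (rule tr)
    show ?thesis unfolding incr using A B1' B2' T1 T2
    proof eventually_elim
      case (elim x)
      let ?c1 = "real_cond_exp M (nat_filt M I n) (g1 n) x"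
      let ?c2 = "real_cond_exp M (nat_filt M I n) (g2 n) x"
      have main: "real_cond_exp M (nat_filt M I n) (\<lambda>x. f1 n x * g1 n x - f2 n x * g2 n x) x = f1 n x * ?c1 - f2 n x * ?c2"
        using elim(1-3) by simp
      show ?case
      proof (cases "I n x = i")
        case True
        let ?a = "W (edge_wt X0 I n {i, s} x)"
        let ?b = "W (edge_wt X0 I n {i, p} x)"
        have pa: "?a > 0" "?b > 0" using Wpos by auto
        have sm: "(\<Sum>w\<in>{w. cyc_adj l i w}. W (edge_wt X0 I n {i, w} x)) = ?a + ?b"
          using cf by simp
        have c1: "?c1 = ?a / (?a + ?b)" using elim(4) True cf sm by simp
        have c2: "?c2 = ?b / (?a + ?b)" using elim(5) True cf sm by simp
        have "f1 n x = 1 / ?a" "f2 n x = 1 / ?b" using True by (simp_all add: f1_def f2_def)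
        then show ?thesis using main c1 c2 pa by simp
      next
        case False
        then have "f1 n x = 0" "f2 n x = 0" by (simp_all add: f1_def f2_def)
        then show ?thesis using main by simp
      qed
    qed
  qed
qed

lemma ae_adj:
  fixes I :: "nat \<Rightarrow> 'a \<Rightarrow> nat"
  assumes P: "prob_space M" and meas: "\<And>n. I n \<in> measurable M (count_space UNIV)"
    and tr: "\<And>n v v'. AE x in M. (if I n x = v then 1 else 0) * real_cond_exp M (nat_filt M I n) (\<lambda>y. if I (Suc n) y = v' then 1 else 0) x
        = (if I n x = v \<and> cyc_adj l v v' then W (edge_wt X0 I n {v, v'} x) / (\<Sum>w\<in>{w. cyc_adj l v w}. W (edge_wt X0 I n {v, w} x)) else 0)"
  shows "AE x in M. \<forall>k. cyc_adj l (I k x) (I (Suc k) x)"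
proof -
  interpret prob_space M by fact
  have one: "AE x in M. \<not> (I k x = v \<and> I (Suc k) x = v')" if na: "\<not> cyc_adj l v v'" for k v v'
  proof -
    interpret S: sigma_finite_subalgebra M "nat_filt M I k" by (rule nat_filt_subalg[OF P meas])
    have sub: "subalgebra M (nat_filt M I k)" by (auto simp: subalgebra_def nat_filt_basic[OF meas])
    define f where "f = (\<lambda>x. if I k x = v then 1 else (0::real))"
    define g where "g = (\<lambda>y. if I (Suc k) y = v' then 1 else (0::real))"
    have fm: "f \<in> borel_measurable (nat_filt M I k)" by (rule filt_meas_dep[OF meas]) (auto simp: f_def)
    have gm: "g \<in> borel_measurable M" by (rule meas_M_dep[of I M "Suc k", OF meas]) (auto simp: g_def)
    have fM: "f \<in> borel_measurable M" by (rule measurable_from_subalg[OF sub fm])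
    have pm: "(\<lambda>x. f x * g x) \<in> borel_measurable M" using fM gm by simp
    have int: "integrable M (\<lambda>x. f x * g x)"
    proof (rule integrable_const_bound[where B=1])
      show "AE x in M. norm (f x * g x) \<le> 1" by (simp add: f_def g_def)
    qed (rule pm)
    have e1: "AE x in M. real_cond_exp M (nat_filt M I k) (\<lambda>x. f x * g x) x = f x * real_cond_exp M (nat_filt M I k) g x"
      by (rule S.real_cond_exp_mult[OF fm gm int])
    have e2: "AE x in M. f x * real_cond_exp M (nat_filt M I k) g x = 0"
      using tr[of k v v'] na unfolding f_def g_def by simp
    have "(\<integral>x. f x * g x \<partial>M) = (\<integral>x. real_cond_exp M (nat_filt M I k) (\<lambda>x. f x * g x) x \<partial>M)"
      using S.real_cond_exp_int(2)[OF int] by simp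
    also have "\<dots> = (\<integral>x. 0 \<partial>M)"
    proof (rule integral_cong_AE)
      show "real_cond_exp M (nat_filt M I k) (\<lambda>x. f x * g x) \<in> borel_measurable M"
        using S.real_cond_exp_int(1)[OF int] by (rule borel_measurable_integrable)
      show "AE x in M. real_cond_exp M (nat_filt M I k) (\<lambda>x. f x * g x) x = 0"
        using e1 e2 by eventually_elim simp
    qed simp
    finally have "(\<integral>x. f x * g x \<partial>M) = 0" by simp
    then have "AE x in M. f x * g x = 0"
      using integral_nonneg_eq_0_iff_AE[OF int] by (simp add: f_def g_def)
    then show ?thesis by eventually_elim (auto simp: f_def g_def)
  qed
  have h: "AE x in M. \<not> cyc_adj l v v' \<longrightarrow> \<not> (I k x = v \<and> I (Suc k) x = v')" for k v v'
  proof (cases "cyc_adj l v v'")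
    case True then show ?thesis by simp
  next
    case False then show ?thesis using one[OF False] by eventually_elim simp
  qed
  then have "AE x in M. \<forall>k v v'. \<not> cyc_adj l v v' \<longrightarrow> \<not> (I k x = v \<and> I (Suc k) x = v')"
    unfolding AE_all_countable using h by blast
  then show ?thesis by eventually_elim blast
qed

lemma edge_wt_Suc: "edge_wt X0 I (Suc n) e x = edge_wt X0 I n e x + (if {I n x, I (Suc n) x} = e then 1 else 0)"
proof -
  have "{k. k < Suc n \<and> {I k x, I (Suc k) x} = e} = {k. k < n \<and> {I k x, I (Suc k) x} = e} \<union> (if {I n x, I (Suc n) x} = e then {n} else {})"
    by (auto simp: less_Suc_eq)
  moreover have "finite {k. k < n \<and> {I k x, I (Suc k) x} = e}" by auto
  ultimately show ?thesis unfolding edge_wt_def by auto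
qed

lemma Wstar_Suc: "Wstar W (Suc m) = Wstar W m + 1 / W m"
  by (simp add: Wstar_def)

lemma cyc_edge_inj:
  assumes l3: "l \<ge> 3" and "i < l" "j < l" "cyc_edge l i = cyc_edge l j"
  shows "i = j"
  using assms unfolding cyc_edge_def doubleton_eq_iff by (auto simp: sucmod split: if_splits)

lemma kappa_identity:
  assumes l3: "l \<ge> 3" and ev: "even l" and adj: "\<And>k. cyc_adj l (I k x) (I (Suc k) x)"
  shows "kappa l W X0 I n x = (\<Sum>i<l. (-1) ^ i * Wstar W (edge_wt X0 I n (cyc_edge l i) x))"
proof (induction n)
  case 0
  then show ?case by (simp add: kappa_def kappa_i_def edge_wt_def)
next
  case (Suc n)
  define a where "a = I n x"
  define b where "b = I (Suc n) x"
  have ab: "a < l" "b < l" "b = Suc a mod l \<or> a = Suc b mod l"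
    using adj[of n] unfolding cyc_adj_def a_def b_def by auto
  have dk: "kappa l W X0 I (Suc n) x - kappa l W X0 I n x =
      (\<Sum>i<l. (-1) ^ i * (kappa_i l W X0 I i (Suc n) x - kappa_i l W X0 I i n x))"
    by (simp add: kappa_def sum_subtractf[symmetric] right_diff_distrib)
  have dr: "(\<Sum>i<l. (-1) ^ i * Wstar W (edge_wt X0 I (Suc n) (cyc_edge l i) x)) - (\<Sum>i<l. (-1) ^ i * Wstar W (edge_wt X0 I n (cyc_edge l i) x)) =
      (\<Sum>i<l. (-1) ^ i * (Wstar W (edge_wt X0 I (Suc n) (cyc_edge l i) x) - Wstar W (edge_wt X0 I n (cyc_edge l i) x)))"
    by (simp add: sum_subtractf[symmetric] right_diff_distrib)
  have di: "kappa_i l W X0 I i (Suc n) x - kappa_i l W X0 I i n x =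
     (if a = i \<and> b = Suc i mod l then 1 / W (edge_wt X0 I n (cyc_edge l i) x) else 0)
   - (if a = i \<and> b = (i + l - 1) mod l then 1 / W (edge_wt X0 I n (cyc_edge l ((i + l - 1) mod l)) x) else 0)" for i
    by (simp add: kappa_i_def a_def b_def)
  have ri: "Wstar W (edge_wt X0 I (Suc n) e x) - Wstar W (edge_wt X0 I n e x) = (if {a, b} = e then 1 / W (edge_wt X0 I n e x) else 0)" for e
    by (simp add: edge_wt_Suc Wstar_Suc a_def b_def)
  have eq: "(\<Sum>i<l. (-1) ^ i * (kappa_i l W X0 I i (Suc n) x - kappa_i l W X0 I i n x)) =
      (\<Sum>i<l. (-1) ^ i * (Wstar W (edge_wt X0 I (Suc n) (cyc_edge l i) x) - Wstar W (edge_wt X0 I n (cyc_edge l i) x)))"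
  proof (cases "b = Suc a mod l")
    case True
    have ea: "{a, b} = cyc_edge l a" using True by (simp add: cyc_edge_def)
    have nb: "b \<noteq> (a + l - 1) mod l" using cyc_facts(4)[OF l3 ab(1)] True by simp
    define w where "w = (-1) ^ a * (1 / W (edge_wt X0 I n (cyc_edge l a) x) :: real)"
    have L: "(-1) ^ i * (kappa_i l W X0 I i (Suc n) x - kappa_i l W X0 I i n x) = (if i = a then w else 0)" if "i < l" for i
      unfolding di w_def using True nb by auto
    have R: "(-1) ^ i * (Wstar W (edge_wt X0 I (Suc n) (cyc_edge l i) x) - Wstar W (edge_wt X0 I n (cyc_edge l i) x)) = (if i = a then w else 0)" if "i < l" for i
      unfolding ri w_def ea using cyc_edge_inj[OF l3 ab(1) that] by auto
    have s1: "(\<Sum>i<l. (-1) ^ i * (kappa_i l W X0 I i (Suc n) x - kappa_i l W X0 I i n x)) = (\<Sum>i<l. if i = a then w else 0)"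
      by (intro sum.cong refl) (rule L, simp)
    have s2: "(\<Sum>i<l. (-1) ^ i * (Wstar W (edge_wt X0 I (Suc n) (cyc_edge l i) x) - Wstar W (edge_wt X0 I n (cyc_edge l i) x))) = (\<Sum>i<l. if i = a then w else 0)"
      by (intro sum.cong refl) (rule R, simp)
    show ?thesis unfolding s1 s2 ..
  next
    case False
    then have aS: "a = Suc b mod l" using ab by simp
    have pa: "(a + l - 1) mod l = b" using ab aS by (auto simp: sucmod predmod split: if_splits)
    have eb: "{a, b} = cyc_edge l b" using aS by (auto simp: cyc_edge_def)
    define w where "w = (-1) ^ b * (1 / W (edge_wt X0 I n (cyc_edge l b) x) :: real)"
    have sgn: "- ((-1::real) ^ a) = (-1) ^ b"
    proof (cases "Suc b = l")
      case True
      then have "a = 0" using aS by simp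
      moreover have "even (Suc b)" using True ev by simp
      then have "odd b" by simp
      ultimately show ?thesis by simp
    next
      case c: False
      then have "a = Suc b" using aS ab by (simp add: sucmod)
      then show ?thesis by simp
    qed
    have L: "(-1) ^ i * (kappa_i l W X0 I i (Suc n) x - kappa_i l W X0 I i n x) = (if i = a then w else 0)" if "i < l" for i
    proof (cases "i = a")
      case True
      have pa': "(a + l - Suc 0) mod l = b" using pa by simp
      have "kappa_i l W X0 I i (Suc n) x - kappa_i l W X0 I i n x = - (1 / W (edge_wt X0 I n (cyc_edge l b) x))"
        unfolding di using True False pa' by simp
      then show ?thesis using True by (simp add: w_def sgn[symmetric])
    next
      case c2: False
      then show ?thesis by (simp add: di)
    qed
    have R: "(-1) ^ i * (Wstar W (edge_wt X0 I (Suc n) (cyc_edge l i) x) - Wstar W (edge_wt X0 I n (cyc_edge l i) x)) = (if i = b then w else 0)" if "i < l" for i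
      unfolding ri w_def eb using cyc_edge_inj[OF l3 ab(2) that] by auto
    have s1: "(\<Sum>i<l. (-1) ^ i * (kappa_i l W X0 I i (Suc n) x - kappa_i l W X0 I i n x)) = (\<Sum>i<l. if i = a then w else 0)"
      by (intro sum.cong refl) (rule L, simp)
    have s2: "(\<Sum>i<l. (-1) ^ i * (Wstar W (edge_wt X0 I (Suc n) (cyc_edge l i) x) - Wstar W (edge_wt X0 I n (cyc_edge l i) x))) = (\<Sum>i<l. if i = b then w else 0)"
      by (intro sum.cong refl) (rule R, simp)
    show ?thesis unfolding s1 s2 using ab by simp
  qed
  show ?case using Suc.IH dk dr eq by linarith
qed

lemma Wstar_mono:
  fixes W :: "nat \<Rightarrow> real"
  assumes Wpos: "\<And>k. W k > 0" and "m \<le> m'"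
  shows "Wstar W m \<le> Wstar W m'"
  unfolding Wstar_def using assms by (intro sum_mono2) (auto simp: less_imp_le)

lemma edge_wt_mono:
  assumes "n \<le> n'"
  shows "edge_wt X0 I n e x \<le> edge_wt X0 I n' e x"
proof -
  have "card {k. k < n \<and> {I k x, I (Suc k) x} = e} \<le> card {k. k < n' \<and> {I k x, I (Suc k) x} = e}"
    using assms by (intro card_mono) auto
  then show ?thesis unfolding edge_wt_def by simp
qed

lemma Wstar_lim:
  fixes W :: "nat \<Rightarrow> real"
  assumes "summable (\<lambda>k. 1 / W k)"
  shows "Wstar W \<longlonglongrightarrow> (\<Sum>k. 1 / W k)"
proof -
  have "Wstar W = (\<lambda>n. \<Sum>i<n. 1 / W i)" by (rule ext) (simp add: Wstar_def)
  then show ?thesis using summable_LIMSEQ[OF assms] by simp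
qed

lemma Wstar_le:
  fixes W :: "nat \<Rightarrow> real"
  assumes Wpos: "\<And>k. W k > 0" and "summable (\<lambda>k. 1 / W k)"
  shows "Wstar W m \<le> (\<Sum>k. 1 / W k)"
  unfolding Wstar_def using assms by (intro sum_le_suminf) (auto simp: less_imp_le)

lemma each_conv:
  fixes W :: "nat \<Rightarrow> real"
  assumes Wpos: "\<And>k. W k > 0" and sm: "summable (\<lambda>k. 1 / W k)"
  shows "\<exists>L. (\<lambda>n. Wstar W (edge_wt X0 I n e x)) \<longlonglongrightarrow> L"
proof -
  have "incseq (\<lambda>n. Wstar W (edge_wt X0 I n e x))"
    unfolding incseq_def by (intro allI impI Wstar_mono[OF Wpos] edge_wt_mono)
  moreover have "bdd_above (range (\<lambda>n. Wstar W (edge_wt X0 I n e x)))"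
    using Wstar_le[OF Wpos sm] by (intro bdd_aboveI) auto
  ultimately show ?thesis using LIMSEQ_incseq_SUP by blast
qed

lemma rhs_conv:
  fixes W :: "nat \<Rightarrow> real"
  assumes Wpos: "\<And>k. W k > 0" and sm: "summable (\<lambda>k. 1 / W k)"
  shows "convergent (\<lambda>n. \<Sum>i<l. (-1) ^ i * Wstar W (edge_wt X0 I n (cyc_edge l i) x))"
proof -
  have "\<forall>i. \<exists>L. (\<lambda>n. Wstar W (edge_wt X0 I n (cyc_edge l i) x)) \<longlonglongrightarrow> L"
    by (intro allI each_conv[OF Wpos sm])
  then obtain L where L0: "\<forall>i. (\<lambda>n. Wstar W (edge_wt X0 I n (cyc_edge l i) x)) \<longlonglongrightarrow> L i"
    using choice[of "\<lambda>i L. (\<lambda>n. Wstar W (edge_wt X0 I n (cyc_edge l i) x)) \<longlonglongrightarrow> L"] by blast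
  have L: "(\<lambda>n. Wstar W (edge_wt X0 I n (cyc_edge l i) x)) \<longlonglongrightarrow> L i" for i using L0 by blast
  have "(\<lambda>n. \<Sum>i<l. (-1) ^ i * Wstar W (edge_wt X0 I n (cyc_edge l i) x)) \<longlonglongrightarrow> (\<Sum>i<l. (-1) ^ i * L i)"
    by (intro tendsto_sum tendsto_mult_left L)
  then show ?thesis unfolding convergent_def by blast
qed

lemma edge_wt_infinite:
  assumes "infinite {k. {I k x, I (Suc k) x} = e}"
  shows "filterlim (\<lambda>n. edge_wt X0 I n e x) at_top sequentially"
  unfolding filterlim_at_top
proof
  fix Z
  obtain B where B: "finite B" "card B = Z" "B \<subseteq> {k. {I k x, I (Suc k) x} = e}"
    using infinite_arbitrarily_large[OF assms] by blast
  define N where "N = Suc (Max B)"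
  have "Z \<le> edge_wt X0 I n e x" if "n \<ge> N" for n
  proof -
    have "B \<subseteq> {k. k < n \<and> {I k x, I (Suc k) x} = e}"
    proof
      fix b assume b: "b \<in> B"
      then have "b \<le> Max B" using B(1) by simp
      then show "b \<in> {k. k < n \<and> {I k x, I (Suc k) x} = e}" using b B(3) that N_def by auto
    qed
    then have "card B \<le> card {k. k < n \<and> {I k x, I (Suc k) x} = e}" by (intro card_mono) auto
    then show ?thesis using B(2) unfolding edge_wt_def by simp
  qed
  then show "\<forall>\<^sub>F n in sequentially. Z \<le> edge_wt X0 I n e x" unfolding eventually_sequentially by blast
qed

lemma alt_sum_even: "even l \<Longrightarrow> (\<Sum>i<l. (-1::real) ^ i) = 0"
proof -
  assume "even l"
  then obtain m where m: "l = 2 * m" by blast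
  have "(\<Sum>i<2 * m. (-1::real) ^ i) = 0"
  proof (induction m)
    case (Suc m)
    have "{..<2 * Suc m} = insert (Suc (2 * m)) (insert (2 * m) {..<2 * m})" by auto
    then show ?case using Suc by simp
  qed simp
  then show ?thesis using m by simp
qed

lemma rhs_lim_inf:
  fixes W :: "nat \<Rightarrow> real"
  assumes sm: "summable (\<lambda>k. 1 / W k)" and inf: "\<forall>i<l. infinite {k. {I k x, I (Suc k) x} = cyc_edge l i}"
    and ev: "even l"
  shows "(\<lambda>n. \<Sum>i<l. (-1) ^ i * Wstar W (edge_wt X0 I n (cyc_edge l i) x)) \<longlonglongrightarrow> 0"
proof -
  let ?S = "\<Sum>k. 1 / W k"
  have "(\<lambda>n. \<Sum>i<l. (-1) ^ i * Wstar W (edge_wt X0 I n (cyc_edge l i) x)) \<longlonglongrightarrow> (\<Sum>i<l. (-1) ^ i * ?S)"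
  proof (intro tendsto_sum tendsto_mult_left)
    fix i assume "i \<in> {..<l}"
    then have "infinite {k. {I k x, I (Suc k) x} = cyc_edge l i}" using inf by auto
    then show "(\<lambda>n. Wstar W (edge_wt X0 I n (cyc_edge l i) x)) \<longlonglongrightarrow> ?S"
      by (rule filterlim_compose[OF Wstar_lim[OF sm] edge_wt_infinite])
  qed
  moreover have "(\<Sum>i<l. (-1) ^ i * ?S) = 0"
    using alt_sum_even[OF ev] by (simp add: sum_distrib_right[symmetric])
  ultimately show ?thesis by simp
qed

theorem mainTheorem5:
  fixes M :: "'a measure" and l :: nat and W :: "nat \<Rightarrow> real"
    and X0 :: "nat set \<Rightarrow> nat" and v0 :: nat and I :: "nat \<Rightarrow> 'a \<Rightarrow> nat"
  assumes l3: "l \<ge> 3"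
    and Wpos: "\<And>k. W k > 0"
    and v0: "v0 < l"
    and errw: "is_errw M l W X0 v0 I"
  shows "(\<forall>i<l. martingale M (nat_filt M I) (kappa_i l W X0 I i))
    \<and> (even l \<longrightarrow>
         (AE x in M. \<forall>n. kappa l W X0 I n x
                = (\<Sum>i<l. (-1) ^ i * Wstar W (edge_wt X0 I n (cyc_edge l i) x)))
       \<and> martingale M (nat_filt M I) (kappa l W X0 I)
       \<and> (summable (\<lambda>k. 1 / W k) \<longrightarrow>
            (\<exists>kinf. kinf \<in> borel_measurable M
               \<and> (AE x in M. (\<lambda>n. kappa l W X0 I n x) \<longlonglongrightarrow> kinf x)
               \<and> (AE x in M. (\<forall>i<l. infinite {k. {I k x, I (Suc k) x} = cyc_edge l i})
                              \<longrightarrow> kinf x = 0))))"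
proof -
  have P: "prob_space M" and meas: "\<And>n. I n \<in> measurable M (count_space UNIV)"
    using errw unfolding is_errw_def by blast+
  have tr: "\<And>n v v'. AE x in M. (if I n x = v then 1 else 0) * real_cond_exp M (nat_filt M I n) (\<lambda>y. if I (Suc n) y = v' then 1 else 0) x
        = (if I n x = v \<and> cyc_adj l v v' then W (edge_wt X0 I n {v, v'} x) / (\<Sum>w\<in>{w. cyc_adj l v w}. W (edge_wt X0 I n {v, w} x)) else 0)"
    using errw unfolding is_errw_def by blast
  interpret prob_space M by (rule P)
  have sub: "\<And>n. subalgebra M (nat_filt M I n)" by (auto simp: subalgebra_def nat_filt_basic[OF meas])
  have part1: "\<forall>i<l. martingale M (nat_filt M I) (kappa_i l W X0 I i)"
    using kappa_i_mart[OF l3 Wpos _ P meas tr] by blast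
  let ?R = "\<lambda>n x. (\<Sum>i<l. (-1) ^ i * Wstar W (edge_wt X0 I n (cyc_edge l i) x))"
  have part2: "even l \<longrightarrow>
         (AE x in M. \<forall>n. kappa l W X0 I n x
                = (\<Sum>i<l. (-1) ^ i * Wstar W (edge_wt X0 I n (cyc_edge l i) x)))
       \<and> martingale M (nat_filt M I) (kappa l W X0 I)
       \<and> (summable (\<lambda>k. 1 / W k) \<longrightarrow>
            (\<exists>kinf. kinf \<in> borel_measurable M
               \<and> (AE x in M. (\<lambda>n. kappa l W X0 I n x) \<longlonglongrightarrow> kinf x)
               \<and> (AE x in M. (\<forall>i<l. infinite {k. {I k x, I (Suc k) x} = cyc_edge l i})
                              \<longrightarrow> kinf x = 0)))"
  proof
    assume ev: "even l"
    have adj: "AE x in M. \<forall>k. cyc_adj l (I k x) (I (Suc k) x)" by (rule ae_adj[OF P meas tr])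
    have ident: "AE x in M. \<forall>n. kappa l W X0 I n x = ?R n x"
      using adj by eventually_elim (auto intro: kappa_identity[OF l3 ev])
    have keq: "kappa l W X0 I = (\<lambda>n x. (\<Sum>i\<in>{..<l}. (-1) ^ i * kappa_i l W X0 I i n x) + (\<Sum>i<l. (-1) ^ i * Wstar W (X0 (cyc_edge l i))))"
      by (intro ext) (simp add: kappa_def)
    have mart: "martingale M (nat_filt M I) (kappa l W X0 I)"
      unfolding keq by (rule martingale_lincomb[OF P meas]) (use part1 in auto)
    have conv: "summable (\<lambda>k. 1 / W k) \<longrightarrow>
            (\<exists>kinf. kinf \<in> borel_measurable M
               \<and> (AE x in M. (\<lambda>n. kappa l W X0 I n x) \<longlonglongrightarrow> kinf x)
               \<and> (AE x in M. (\<forall>i<l. infinite {k. {I k x, I (Suc k) x} = cyc_edge l i})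
                              \<longrightarrow> kinf x = 0))"
    proof
      assume sm: "summable (\<lambda>k. 1 / W k)"
      define kinf where "kinf x = lim (\<lambda>n. kappa l W X0 I n x)" for x
      have km: "kappa l W X0 I n \<in> borel_measurable M" for n
        using mart measurable_from_subalg[OF sub] unfolding martingale_def by blast
      have kinfm: "kinf \<in> borel_measurable M" unfolding kinf_def by (rule borel_measurable_lim_metric[OF km])
      have lim1: "AE x in M. (\<lambda>n. kappa l W X0 I n x) \<longlonglongrightarrow> kinf x"
        using ident
      proof eventually_elim
        case (elim x)
        then have "(\<lambda>n. kappa l W X0 I n x) = (\<lambda>n. ?R n x)" by auto
        then have "convergent (\<lambda>n. kappa l W X0 I n x)" using rhs_conv[OF Wpos sm] by simp
        then show ?case unfolding kinf_def by (simp add: convergent_LIMSEQ_iff)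
      qed
      have lim2: "AE x in M. (\<forall>i<l. infinite {k. {I k x, I (Suc k) x} = cyc_edge l i}) \<longrightarrow> kinf x = 0"
        using ident lim1
      proof eventually_elim
        case (elim x)
        show ?case
        proof
          assume inf: "\<forall>i<l. infinite {k. {I k x, I (Suc k) x} = cyc_edge l i}"
          have "(\<lambda>n. kappa l W X0 I n x) = (\<lambda>n. ?R n x)" using elim(1) by auto
          then have "(\<lambda>n. kappa l W X0 I n x) \<longlonglongrightarrow> 0" using rhs_lim_inf[of W l I x X0, OF sm inf ev] by simp
          then show "kinf x = 0" using elim(2) LIMSEQ_unique by blast
        qed
      qed
      show "\<exists>kinf. kinf \<in> borel_measurable M
               \<and> (AE x in M. (\<lambda>n. kappa l W X0 I n x) \<longlonglongrightarrow> kinf x)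
               \<and> (AE x in M. (\<forall>i<l. infinite {k. {I k x, I (Suc k) x} = cyc_edge l i})
                              \<longrightarrow> kinf x = 0)"
        using kinfm lim1 lim2 by blast
    qed
    show "(AE x in M. \<forall>n. kappa l W X0 I n x
                = (\<Sum>i<l. (-1) ^ i * Wstar W (edge_wt X0 I n (cyc_edge l i) x)))
       \<and> martingale M (nat_filt M I) (kappa l W X0 I)
       \<and> (summable (\<lambda>k. 1 / W k) \<longrightarrow>
            (\<exists>kinf. kinf \<in> borel_measurable M
               \<and> (AE x in M. (\<lambda>n. kappa l W X0 I n x) \<longlonglongrightarrow> kinf x)
               \<and> (AE x in M. (\<forall>i<l. infinite {k. {I k x, I (Suc k) x} = cyc_edge l i})
                              \<longrightarrow> kinf x = 0)))"
      using ident mart conv by blast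
  qed
  show ?thesis using part1 part2 by blast
qed

end
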